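(* Let $f_A(x)=1-\dfrac{1}{\sum_{n\ge0}n!\,x^n}$ and $f_B(x)=\dfrac{\sum_{n\ge0}2^nn!\,x^n}{\sum_{n\ge0}n!\,x^n}$. Then $f_B(x)=\sum_{n\ge0}|\mathfrak B_n^{(0)}|x^n$, and for all $n,k\ge0$, $|\mathfrak B_n^{(k)}|$ equals the coefficient of $x^nt^k$ in $\dfrac{f_B(x)}{1-t\,f_A(x)}$.
   Context: $\mathfrak B_n$ is the group of signed permutations of $\{\pm1,\dots,\pm n\}$ ($w(-i)=-w(i)$), a Coxeter group with generators $\tau_0=(-1,1)$ and $\tau_i=(i,i+1)(-i,-i-1)$ for $1\le i\le n-1$ ($\mathfrak B_0$ is trivial). For $w\in\mathfrak B_n$, $C(w)$ is the set of generators not appearing in a (any) reduced expression of $w$; equivalently, with $w(0)=0$, $C(w)=\{\tau_i: |w(j)|<w(k)\ \forall\,0\le j\le i<k\le n\}$. $\mathfrak B_n^{(k)}=\{w\in\mathfrak B_n:|C(w)|=k\}$. *)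

theory Defs
  imports "HOL-Computational_Algebra.Formal_Power_Series"
begin

text \<open>Signed permutations of {+-1,...,+-n}, represented as functions int => int that
  are bijections of {i. 1 <= |i| <= n}, odd (w(-i) = -w i, hence w 0 = 0), and the
  identity outside {-n..n}.\<close>
definition signed_perms :: "nat \<Rightarrow> (int \<Rightarrow> int) set" where
  "signed_perms n = {w. bij_betw w {i. 1 \<le> \<bar>i\<bar> \<and> \<bar>i\<bar> \<le> int n} {i. 1 \<le> \<bar>i\<bar> \<and> \<bar>i\<bar> \<le> int n}
      \<and> (\<forall>i. w (- i) = - w i)
      \<and> (\<forall>i. \<bar>i\<bar> > int n \<longrightarrow> w i = i)}"

text \<open>C(w): indices i (standing for generator tau_i, 0 <= i <= n-1) such that
  |w j| < w k for all 0 <= j <= i < k <= n.\<close>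
definition Cset :: "nat \<Rightarrow> (int \<Rightarrow> int) \<Rightarrow> int set" where
  "Cset n w = {i. 0 \<le> i \<and> i < int n \<and>
      (\<forall>j k. 0 \<le> j \<and> j \<le> i \<and> i < k \<and> k \<le> int n \<longrightarrow> \<bar>w j\<bar> < w k)}"

definition Bnk :: "nat \<Rightarrow> nat \<Rightarrow> (int \<Rightarrow> int) set" where
  "Bnk n k = {w \<in> signed_perms n. card (Cset n w) = k}"

definition fA :: "rat fps" where
  "fA = 1 - inverse (Abs_fps (\<lambda>n. fact n))"

definition fB :: "rat fps" where
  "fB = Abs_fps (\<lambda>n. 2 ^ n * fact n) * inverse (Abs_fps (\<lambda>n. fact n))"

text \<open>Bivariate series: outer variable t, coefficients are series in x.\<close>
definition GF :: "rat fps fps" where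
  "GF = fps_const fB * inverse (1 - fps_X * fps_const fA)"

end

theory Submission
  imports Defs "HOL-Combinatorics.Permutations"
begin

definition Ind :: "nat \<Rightarrow> (int \<Rightarrow> int) set" where
  "Ind m = {v \<in> signed_perms m. Cset m v = {0}}"
definition PosP :: "nat \<Rightarrow> (int \<Rightarrow> int) set" where
  "PosP n = {w \<in> signed_perms n. \<forall>x>0. w x > 0}"
definition AA :: "nat \<Rightarrow> int set" where
  "AA n = {i. 1 \<le> \<bar>i\<bar> \<and> \<bar>i\<bar> \<le> int n}"

lemma finite_AA: "finite (AA n)"
  by (rule finite_subset[of _ "{- int n..int n}"]) (auto simp: AA_def)

lemma sp_iff: "w \<in> signed_perms n \<longleftrightarrow> (\<forall>x\<in>AA n. w x \<in> AA n) \<and> inj_on w (AA n)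
   \<and> (\<forall>i. w (-i) = - w i) \<and> (\<forall>i. \<bar>i\<bar> > int n \<longrightarrow> w i = i)"
proof -
  have "bij_betw w (AA n) (AA n) \<longleftrightarrow> (\<forall>x\<in>AA n. w x \<in> AA n) \<and> inj_on w (AA n)"
    using endo_inj_surj[OF finite_AA, of w n] by (auto simp: bij_betw_def)
  then show ?thesis unfolding signed_perms_def AA_def[symmetric] by auto
qed

lemma sp_D:
  assumes "w \<in> signed_perms n"
  shows "\<And>x. x \<in> AA n \<Longrightarrow> w x \<in> AA n" "inj_on w (AA n)" "\<And>i. w (-i) = - w i"
    "\<And>i. \<bar>i\<bar> > int n \<Longrightarrow> w i = i" "w 0 = 0"
  using assms unfolding sp_iff apply auto
  by (metis add.inverse_neutral neg_equal_zero)

lemma sp_notAA: "w \<in> signed_perms n \<Longrightarrow> x \<notin> AA n \<Longrightarrow> w x = x"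
  using sp_D[of w n] by (cases "x = 0") (auto simp: AA_def)

lemma sp_inj: assumes "w \<in> signed_perms n" shows "inj w"
proof (rule injI)
  fix x y assume e: "w x = w y"
  show "x = y"
  proof (cases "x \<in> AA n"; cases "y \<in> AA n")
    assume "x \<in> AA n" "y \<in> AA n" then show ?thesis using e sp_D(2)[OF assms] by (auto dest: inj_onD)
  next
    assume "x \<in> AA n" "y \<notin> AA n" then show ?thesis using e sp_D(1)[OF assms, of x] sp_notAA[OF assms, of y] by auto
  next
    assume "x \<notin> AA n" "y \<in> AA n" then show ?thesis using e sp_D(1)[OF assms, of y] sp_notAA[OF assms, of x] by auto
  next
    assume "x \<notin> AA n" "y \<notin> AA n" then show ?thesis using e sp_notAA[OF assms] by auto
  qed
qed

lemma sp_abs: "w \<in> signed_perms n \<Longrightarrow> \<bar>w \<bar>x\<bar>\<bar> = \<bar>w x\<bar>"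
  using sp_D(3)[of w n x] by (cases "x \<ge> 0") auto

lemma sp_AA_bound: "w \<in> signed_perms n \<Longrightarrow> 1 \<le> \<bar>x\<bar> \<Longrightarrow> \<bar>x\<bar> \<le> int n \<Longrightarrow> 1 \<le> \<bar>w x\<bar> \<and> \<bar>w x\<bar> \<le> int n"
  using sp_D(1)[of w n x] by (auto simp: AA_def)

lemma sp_le: assumes "w \<in> signed_perms n" "\<bar>x\<bar> \<le> int n" shows "\<bar>w x\<bar> \<le> int n"
  using sp_AA_bound[OF assms(1), of x] assms sp_D(5)[OF assms(1)] by (cases "x = 0") auto

lemma sp_comp: assumes "p \<in> signed_perms n" "q \<in> signed_perms n" shows "p \<circ> q \<in> signed_perms n"
  unfolding sp_iff
proof (intro conjI ballI allI impI)
  show "\<And>x. x \<in> AA n \<Longrightarrow> (p \<circ> q) x \<in> AA n" using sp_D(1)[OF assms(1)] sp_D(1)[OF assms(2)] by simp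
  show "inj_on (p \<circ> q) (AA n)" using sp_inj[OF assms(1)] sp_inj[OF assms(2)] by (metis inj_compose inj_on_subset subset_UNIV)
  show "\<And>i. (p \<circ> q) (- i) = - (p \<circ> q) i" using sp_D(3)[OF assms(1)] sp_D(3)[OF assms(2)] by simp
  show "\<And>i. int n < \<bar>i\<bar> \<Longrightarrow> (p \<circ> q) i = i" using sp_D(4)[OF assms(1)] sp_D(4)[OF assms(2)] by simp
qed

lemma Cset_sub: "Cset n w \<subseteq> {0..<int n}"
  by (auto simp: Cset_def)

lemma finite_Cset: "finite (Cset n w)"
  using finite_subset[OF Cset_sub] by blast

lemma sgn_eq: fixes a b x y :: int
  assumes "a > 0" "b > 0" "x \<noteq> 0" "y \<noteq> 0" "sgn x * a = sgn y * b"
  shows "sgn x = sgn y \<and> a = b"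
proof -
  have "sgn x = 1 \<or> sgn x = -1" "sgn y = 1 \<or> sgn y = -1" using assms(3,4) by (auto simp: sgn_if)
  then show ?thesis using assms by auto
qed

lemma sgn_abs_eq: "sgn x = sgn y \<Longrightarrow> \<bar>x\<bar> = \<bar>y\<bar> \<Longrightarrow> (x::int) = y"
  by (auto simp: sgn_if abs_if split: if_splits)

definition glue :: "nat \<Rightarrow> (int \<Rightarrow> int) \<Rightarrow> (int \<Rightarrow> int) \<Rightarrow> int \<Rightarrow> int" where
  "glue i u v x = (if \<bar>x\<bar> \<le> int i then u x else sgn x * (v (\<bar>x\<bar> - int i) + int i))"
definition lft :: "nat \<Rightarrow> (int \<Rightarrow> int) \<Rightarrow> int \<Rightarrow> int" where
  "lft i w x = (if \<bar>x\<bar> \<le> int i then w x else x)"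
definition rgt :: "nat \<Rightarrow> (int \<Rightarrow> int) \<Rightarrow> int \<Rightarrow> int" where
  "rgt i w y = sgn y * (w (\<bar>y\<bar> + int i) - int i)"

lemma pos_D: assumes "v \<in> PosP m" shows "v \<in> signed_perms m" "\<And>x. x > 0 \<Longrightarrow> v x > 0"
  "\<And>x. 1 \<le> x \<Longrightarrow> x \<le> int m \<Longrightarrow> v x \<le> int m"
proof -
  show vs: "v \<in> signed_perms m" using assms unfolding PosP_def by blast
  show "\<And>x. x > 0 \<Longrightarrow> v x > 0" using assms unfolding PosP_def by blast
  fix x :: int assume "1 \<le> x" "x \<le> int m"
  then have "\<bar>v x\<bar> \<le> int m" using sp_le[OF vs, of x] by simp
  then show "v x \<le> int m" by simp
qed

lemma glue_big: assumes "\<bar>x\<bar> > int i" shows "\<bar>glue i u v x\<bar> = \<bar>v (\<bar>x\<bar> - int i) + int i\<bar>"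
proof -
  have "x \<noteq> 0" using assms by auto
  then show ?thesis using assms by (simp add: glue_def abs_mult)
qed

lemma glue_sp:
  assumes u: "u \<in> signed_perms i" and v: "v \<in> PosP m" and n: "n = i + m"
  shows "glue i u v \<in> signed_perms n"
  unfolding sp_iff
proof (intro conjI ballI allI impI)
  note vs = pos_D[OF v]
  fix x assume x: "x \<in> AA n"
  show "glue i u v x \<in> AA n"
  proof (cases "\<bar>x\<bar> \<le> int i")
    case True
    then have "x \<in> AA i" using x by (auto simp: AA_def)
    then have "u x \<in> AA i" using sp_D(1)[OF u] by auto
    then show ?thesis using True n by (auto simp: AA_def glue_def)
  next
    case False
    then have "v (\<bar>x\<bar> - int i) > 0" "v (\<bar>x\<bar> - int i) \<le> int m" using vs(2,3) x n by (auto simp: AA_def)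
    then show ?thesis using False n glue_big[of i x u v] by (auto simp: AA_def)
  qed
next
  note vs = pos_D[OF v]
  show "inj_on (glue i u v) (AA n)"
  proof (rule inj_onI)
    fix x y assume x: "x \<in> AA n" and y: "y \<in> AA n" and e: "glue i u v x = glue i u v y"
    have small: "\<bar>glue i u v z\<bar> \<le> int i" if "\<bar>z\<bar> \<le> int i" for z
      using sp_le[OF u that] that by (simp add: glue_def)
    have big: "\<bar>glue i u v z\<bar> > int i" if "\<bar>z\<bar> > int i" for z
      using glue_big[OF that, of u v] vs(2)[of "\<bar>z\<bar> - int i"] that by auto
    show "x = y"
    proof (cases "\<bar>x\<bar> \<le> int i"; cases "\<bar>y\<bar> \<le> int i")
      assume "\<bar>x\<bar> \<le> int i" "\<bar>y\<bar> \<le> int i"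
      then show ?thesis using e sp_inj[OF u] by (simp add: glue_def inj_def)
    next
      assume "\<bar>x\<bar> \<le> int i" "\<not> \<bar>y\<bar> \<le> int i" then show ?thesis using small[of x] big[of y] e by simp
    next
      assume "\<not> \<bar>x\<bar> \<le> int i" "\<bar>y\<bar> \<le> int i" then show ?thesis using small[of y] big[of x] e by simp
    next
      assume a: "\<not> \<bar>x\<bar> \<le> int i" "\<not> \<bar>y\<bar> \<le> int i"
      have px: "v (\<bar>x\<bar> - int i) + int i > 0" and py: "v (\<bar>y\<bar> - int i) + int i > 0"
        using vs(2)[of "\<bar>x\<bar> - int i"] vs(2)[of "\<bar>y\<bar> - int i"] a by linarith+
      have nz: "x \<noteq> 0" "y \<noteq> 0" using a by auto
      have "sgn x * (v (\<bar>x\<bar> - int i) + int i) = sgn y * (v (\<bar>y\<bar> - int i) + int i)"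
        using e a unfolding glue_def by simp
      from sgn_eq[OF px py nz this] have s: "sgn x = sgn y" and "v (\<bar>x\<bar> - int i) = v (\<bar>y\<bar> - int i)"
        by simp_all
      then have "\<bar>x\<bar> - int i = \<bar>y\<bar> - int i" using injD[OF sp_inj[OF vs(1)]] by blast
      then have "\<bar>x\<bar> = \<bar>y\<bar>" by simp
      then show ?thesis using s by (blast intro: sgn_abs_eq)
    qed
  qed
next
  fix x show "glue i u v (- x) = - glue i u v x"
    using sp_D(3)[OF u] by (simp add: glue_def)
next
  note vs = pos_D[OF v]
  fix x assume "int n < \<bar>x\<bar>"
  then have "v (\<bar>x\<bar> - int i) = \<bar>x\<bar> - int i" using sp_D(4)[OF vs(1)] n by auto
  then show "glue i u v x = x" using \<open>int n < \<bar>x\<bar>\<close> n by (simp add: glue_def abs_sgn)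
qed

lemma lft_glue: "u \<in> signed_perms i \<Longrightarrow> lft i (glue i u v) = u"
  using sp_D(4)[of u i] by (auto simp: fun_eq_iff lft_def glue_def)

lemma rgt_glue: assumes v: "v \<in> signed_perms m" shows "rgt i (glue i u v) = v"
proof
  fix y
  show "rgt i (glue i u v) y = v y"
  proof (cases "y = 0")
    case True then show ?thesis using sp_D(5)[OF v] by (simp add: rgt_def)
  next
    case False
    then have "rgt i (glue i u v) y = sgn y * v \<bar>y\<bar>" by (simp add: rgt_def glue_def)
    also have "\<dots> = v y" using sp_D(3)[OF v, of y] False by (cases "y > 0") (auto simp: sgn_if)
    finally show ?thesis .
  qed
qed

lemma sp_abs_inj: assumes w: "w \<in> signed_perms n" and "0 \<le> a" "0 \<le> b" "\<bar>w a\<bar> = \<bar>w b\<bar>" shows "a = b"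
proof -
  have "w a = w b \<or> w a = - w b" using assms(4) by (cases "w a \<ge> 0"; cases "w b \<ge> 0") auto
  then have "w a = w b \<or> w a = w (- b)" using sp_D(3)[OF w, of b] by simp
  then have "a = b \<or> a = - b" using injD[OF sp_inj[OF w]] by blast
  then show ?thesis using assms(2,3) by auto
qed

lemma C_pos: assumes w: "w \<in> signed_perms n" and c: "int i \<in> Cset n w" and k: "int i < k" "k \<le> int n"
  shows "int i < w k"
proof -
  have H: "\<bar>w j\<bar> < w k" if "0 \<le> j" "j \<le> int i" for j using c that k unfolding Cset_def by blast
  have "inj_on (\<lambda>j. \<bar>w j\<bar>) {0..int i}"
    by (rule inj_onI) (rule sp_abs_inj[OF w], auto)
  moreover have "(\<lambda>j. \<bar>w j\<bar>) ` {0..int i} \<subseteq> {0..<w k}" using H by auto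
  ultimately have "card {0..int i} \<le> card {0..<w k}" by (intro card_inj_on_le) auto
  moreover have "card {0..int i} = i + 1" by simp
  moreover have "card {0..<w k} = nat (w k)" by simp
  ultimately show ?thesis by linarith
qed

lemma C_small: assumes w: "w \<in> signed_perms n" and c: "int i \<in> Cset n w" and j: "1 \<le> \<bar>j\<bar>" "\<bar>j\<bar> \<le> int i"
  shows "\<bar>w j\<bar> \<le> int i"
proof (rule ccontr)
  assume a: "\<not> \<bar>w j\<bar> \<le> int i"
  have iN: "int i < int n" using c by (auto simp: Cset_def)
  let ?K = "{int i<..int n}"
  have "w k \<in> ?K" if "k \<in> ?K" for k
  proof -
    have "int i < w k" using C_pos[OF w c, of k] that by auto
    moreover have "\<bar>w k\<bar> \<le> int n" using sp_le[OF w, of k] that by auto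
    ultimately show ?thesis by auto
  qed
  then have "w ` ?K \<subseteq> ?K" by auto
  moreover have "inj_on w ?K" using sp_inj[OF w] by (metis inj_on_subset subset_UNIV)
  ultimately have "w ` ?K = ?K" by (intro endo_inj_surj) auto
  moreover have "\<bar>w j\<bar> \<in> ?K" using a sp_le[OF w, of j] j iN by auto
  ultimately obtain k where k: "k \<in> ?K" "w k = \<bar>w j\<bar>" by (metis imageE)
  have H: "\<bar>w j'\<bar> < w k'" if "0 \<le> j'" "j' \<le> int i" "int i < k'" "k' \<le> int n" for j' k'
    using c that unfolding Cset_def by blast
  have "\<bar>w \<bar>j\<bar>\<bar> < w k" using H[of "\<bar>j\<bar>" k] k j by auto
  then show False using k sp_abs[OF w, of j] by simp
qed

lemma split_sp:
  assumes w: "w \<in> signed_perms n" and c: "int i \<in> Cset n w"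
  shows "lft i w \<in> signed_perms i" "rgt i w \<in> PosP (n - i)" "glue i (lft i w) (rgt i w) = w"
proof -
  have iN: "i < n" using c by (auto simp: Cset_def)
  show "lft i w \<in> signed_perms i" unfolding sp_iff
  proof (intro conjI ballI allI impI)
    fix x assume x: "x \<in> AA i"
    then show "lft i w x \<in> AA i" using C_small[OF w c, of x] sp_AA_bound[OF w, of x] iN
      by (auto simp: AA_def lft_def)
  next
    have "inj_on w (AA i)" using sp_inj[OF w] by (metis inj_on_subset subset_UNIV)
    then show "inj_on (lft i w) (AA i)" by (rule inj_on_cong[THEN iffD1, rotated]) (auto simp: AA_def lft_def)
  next
    fix x show "lft i w (- x) = - lft i w x" using sp_D(3)[OF w] by (simp add: lft_def)
  next
    fix x assume "int i < \<bar>x\<bar>" then show "lft i w x = x" by (simp add: lft_def)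
  qed
  have R: "int i < w (\<bar>y\<bar> + int i)" if "y \<noteq> 0" for y
  proof (cases "\<bar>y\<bar> + int i \<le> int n")
    case True then show ?thesis using C_pos[OF w c, of "\<bar>y\<bar> + int i"] that by auto
  next
    case False then show ?thesis using sp_D(4)[OF w, of "\<bar>y\<bar> + int i"] that by auto
  qed
  have rs: "rgt i w \<in> signed_perms (n - i)" unfolding sp_iff
  proof (intro conjI ballI allI impI)
    fix y assume y: "y \<in> AA (n - i)"
    then have "y \<noteq> 0" by (auto simp: AA_def)
    then have "int i < w (\<bar>y\<bar> + int i)" "w (\<bar>y\<bar> + int i) \<le> int n"
      using R sp_le[OF w, of "\<bar>y\<bar> + int i"] y iN by (auto simp: AA_def)
    then show "rgt i w y \<in> AA (n - i)" using \<open>y \<noteq> 0\<close> iN by (auto simp: AA_def rgt_def abs_mult)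
  next
    show "inj_on (rgt i w) (AA (n - i))"
    proof (rule inj_onI)
      fix x y assume x: "x \<in> AA (n - i)" and y: "y \<in> AA (n - i)" and e: "rgt i w x = rgt i w y"
      have "x \<noteq> 0" "y \<noteq> 0" using x y by (auto simp: AA_def)
      then have px: "w (\<bar>x\<bar> + int i) - int i > 0" and py: "w (\<bar>y\<bar> + int i) - int i > 0" using R by auto
      have "sgn x = sgn y \<and> w (\<bar>x\<bar> + int i) - int i = w (\<bar>y\<bar> + int i) - int i"
        using sgn_eq[OF px py \<open>x \<noteq> 0\<close> \<open>y \<noteq> 0\<close>] e unfolding rgt_def by blast
      then have s: "sgn x = sgn y" and "w (\<bar>x\<bar> + int i) = w (\<bar>y\<bar> + int i)" by simp_all
      then have "\<bar>x\<bar> + int i = \<bar>y\<bar> + int i" using injD[OF sp_inj[OF w]] by blast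
      then have "\<bar>x\<bar> = \<bar>y\<bar>" "sgn x = sgn y" using s by simp_all
      then show "x = y" by (blast intro: sgn_abs_eq)
    qed
  next
    fix y show "rgt i w (- y) = - rgt i w y" by (simp add: rgt_def)
  next
    fix y assume "int (n - i) < \<bar>y\<bar>"
    then have "w (\<bar>y\<bar> + int i) = \<bar>y\<bar> + int i" using sp_D(4)[OF w] iN by auto
    then show "rgt i w y = y" by (simp add: rgt_def sgn_mult_abs)
  qed
  show "rgt i w \<in> PosP (n - i)" unfolding PosP_def
  proof (intro CollectI conjI allI impI rs)
    fix y :: int assume "y > 0" then show "rgt i w y > 0" using R[of y] by (simp add: rgt_def)
  qed
  show "glue i (lft i w) (rgt i w) = w"
  proof
    fix x
    show "glue i (lft i w) (rgt i w) x = w x"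
    proof (cases "\<bar>x\<bar> \<le> int i")
      case True then show ?thesis by (simp add: glue_def lft_def)
    next
      case False
      then have "glue i (lft i w) (rgt i w) x = sgn x * w \<bar>x\<bar>" by (simp add: glue_def rgt_def)
      also have "\<dots> = w x" using sp_D(3)[OF w, of x] False by (cases "x > 0") (auto simp: sgn_if)
      finally show ?thesis .
    qed
  qed
qed

lemma Cset_glue:
  assumes u: "u \<in> signed_perms i" and v: "v \<in> PosP m" and n: "n = i + m" and m: "m \<ge> 1"
  shows "Cset n (glue i u v) = Cset i u \<union> {int i} \<union> {int i + c | c. c \<in> Cset m v \<and> c > 0}"
proof -
  let ?g = "glue i u v"
  note vs = pos_D[OF v]
  have gs: "?g x = u x" if "\<bar>x\<bar> \<le> int i" for x using that by (simp add: glue_def)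
  have us: "\<bar>u x\<bar> \<le> int i" if "\<bar>x\<bar> \<le> int i" for x using sp_le[OF u that] .
  have gb: "?g x = v (x - int i) + int i" if "x > int i" for x using that by (simp add: glue_def)
  have gbp: "?g x > int i" if "x > int i" for x using gb[OF that] vs(2)[of "x - int i"] that by simp
  show ?thesis
  proof (rule set_eqI)
    fix c
    show "c \<in> Cset n ?g \<longleftrightarrow> c \<in> Cset i u \<union> {int i} \<union> {int i + c | c. c \<in> Cset m v \<and> c > 0}"
    proof
      assume "c \<in> Cset n ?g"
      then have c0: "0 \<le> c" "c < int n"
        and H: "\<And>j k. 0 \<le> j \<Longrightarrow> j \<le> c \<Longrightarrow> c < k \<Longrightarrow> k \<le> int n \<Longrightarrow> \<bar>?g j\<bar> < ?g k"
        unfolding Cset_def by blast+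
      consider "c < int i" | "c = int i" | "c > int i" by linarith
      then show "c \<in> Cset i u \<union> {int i} \<union> {int i + c | c. c \<in> Cset m v \<and> c > 0}"
      proof cases
        case 1
        have "c \<in> Cset i u" unfolding Cset_def
        proof (intro CollectI conjI allI impI)
          show "0 \<le> c" "c < int i" using c0 1 by auto
          fix j k assume jk: "0 \<le> j \<and> j \<le> c \<and> c < k \<and> k \<le> int i"
          then have "\<bar>?g j\<bar> < ?g k" using H[of j k] n by auto
          then show "\<bar>u j\<bar> < u k" using gs[of j] gs[of k] jk 1 by auto
        qed
        then show ?thesis by blast
      next
        case 2 then show ?thesis by blast
      next
        case 3
        have "c - int i \<in> Cset m v" unfolding Cset_def
        proof (intro CollectI conjI allI impI)
          show "0 \<le> c - int i" "c - int i < int m" using c0 3 n by auto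
          fix j k assume jk: "0 \<le> j \<and> j \<le> c - int i \<and> c - int i < k \<and> k \<le> int m"
          have vk: "v k > 0" using vs(2)[of k] jk 3 by auto
          show "\<bar>v j\<bar> < v k"
          proof (cases "j = 0")
            case True then show ?thesis using sp_D(5)[OF vs(1)] vk by simp
          next
            case False
            then have vj: "v j > 0" using vs(2)[of j] jk by auto
            have "\<bar>?g (j + int i)\<bar> < ?g (k + int i)" using H[of "j + int i" "k + int i"] jk n by auto
            moreover have "?g (j + int i) = v j + int i" using gb[of "j + int i"] jk False by auto
            moreover have "?g (k + int i) = v k + int i" using gb[of "k + int i"] jk 3 by auto
            ultimately show ?thesis using vj by simp
          qed
        qed
        moreover have "c = int i + (c - int i)" "c - int i > 0" using 3 by auto
        ultimately show ?thesis by blast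
      qed
    next
      assume "c \<in> Cset i u \<union> {int i} \<union> {int i + c | c. c \<in> Cset m v \<and> c > 0}"
      then consider "c \<in> Cset i u" | "c = int i" | c' where "c = int i + c'" "c' \<in> Cset m v" "c' > 0" by blast
      then show "c \<in> Cset n ?g"
      proof cases
        case 1
        then have c0: "0 \<le> c" "c < int i"
          and H: "\<And>j k. 0 \<le> j \<Longrightarrow> j \<le> c \<Longrightarrow> c < k \<Longrightarrow> k \<le> int i \<Longrightarrow> \<bar>u j\<bar> < u k"
          unfolding Cset_def by blast+
        show ?thesis unfolding Cset_def
        proof (intro CollectI conjI allI impI)
          show "0 \<le> c" "c < int n" using c0 n by auto
          fix j k assume jk: "0 \<le> j \<and> j \<le> c \<and> c < k \<and> k \<le> int n"
          show "\<bar>?g j\<bar> < ?g k"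
          proof (cases "k \<le> int i")
            case True then show ?thesis using H[of j k] gs[of j] gs[of k] jk c0 by auto
          next
            case False then show ?thesis using gbp[of k] us[of j] gs[of j] jk c0 by auto
          qed
        qed
      next
        case 2
        show ?thesis unfolding Cset_def
        proof (intro CollectI conjI allI impI)
          show "0 \<le> c" "c < int n" using 2 n m by auto
          fix j k assume jk: "0 \<le> j \<and> j \<le> c \<and> c < k \<and> k \<le> int n"
          then show "\<bar>?g j\<bar> < ?g k" using gbp[of k] us[of j] gs[of j] 2 by auto
        qed
      next
        case 3
        then have c0: "0 \<le> c'" "c' < int m"
          and H: "\<And>j k. 0 \<le> j \<Longrightarrow> j \<le> c' \<Longrightarrow> c' < k \<Longrightarrow> k \<le> int m \<Longrightarrow> \<bar>v j\<bar> < v k"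
          unfolding Cset_def by blast+
        show ?thesis unfolding Cset_def
        proof (intro CollectI conjI allI impI)
          show "0 \<le> c" "c < int n" using 3 c0 n by auto
          fix j k assume jk: "0 \<le> j \<and> j \<le> c \<and> c < k \<and> k \<le> int n"
          have gk: "?g k = v (k - int i) + int i" using gb[of k] jk 3 by auto
          show "\<bar>?g j\<bar> < ?g k"
          proof (cases "j \<le> int i")
            case True then show ?thesis using gbp[of k] us[of j] gs[of j] jk 3 by auto
          next
            case False
            have "\<bar>v (j - int i)\<bar> < v (k - int i)" using H[of "j - int i" "k - int i"] jk 3 n False by auto
            moreover have "?g j = v (j - int i) + int i" using gb[of j] False by auto
            moreover have "v (j - int i) > 0" using vs(2)[of "j - int i"] False by auto
            ultimately show ?thesis using gk by simp
          qed
        qed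
      qed
    qed
  qed
qed

definition sig :: "int set \<Rightarrow> int \<Rightarrow> int" where
  "sig S x = (if \<bar>x\<bar> \<in> S then - x else x)"

lemma sig_sp: assumes S: "S \<subseteq> {1..int n}" shows "sig S \<in> signed_perms n"
  unfolding sp_iff
proof (intro conjI ballI allI impI)
  fix x assume "x \<in> AA n" then show "sig S x \<in> AA n" by (auto simp: sig_def AA_def)
next
  show "inj_on (sig S) (AA n)"
  proof (rule inj_onI)
    fix x y assume e: "sig S x = sig S y"
    show "x = y"
    proof (cases "\<bar>x\<bar> \<in> S"; cases "\<bar>y\<bar> \<in> S")
      assume a: "\<bar>x\<bar> \<in> S" "\<bar>y\<bar> \<notin> S"
      then have "y = - x" using e by (simp add: sig_def)
      then show ?thesis using a by simp
    next
      assume a: "\<bar>x\<bar> \<notin> S" "\<bar>y\<bar> \<in> S"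
      then have "x = - y" using e by (simp add: sig_def)
      then show ?thesis using a by simp
    qed (use e in \<open>auto simp: sig_def\<close>)
  qed
next
  fix x show "sig S (- x) = - sig S x" by (simp add: sig_def)
next
  fix x assume "int n < \<bar>x\<bar>" then show "sig S x = x" using S by (auto simp: sig_def)
qed

lemma sig_inv: "sig S \<circ> sig S = id"
  by (auto simp: fun_eq_iff sig_def)

lemma neg_set: assumes p: "p \<in> PosP n" and S: "S \<subseteq> {1..int n}"
  shows "{a \<in> {1..int n}. (p \<circ> sig S) a < 0} = S"
proof -
  have "(p \<circ> sig S) a < 0 \<longleftrightarrow> a \<in> S" if "a \<in> {1..int n}" for a
  proof (cases "a \<in> S")
    case True
    then have "(p \<circ> sig S) a = - p a" using that sp_D(3)[OF pos_D(1)[OF p]] by (simp add: sig_def)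
    then show ?thesis using pos_D(2)[OF p, of a] that True by simp
  next
    case False
    then have "(p \<circ> sig S) a = p a" using that by (simp add: sig_def)
    then show ?thesis using pos_D(2)[OF p, of a] that False by simp
  qed
  then show ?thesis using S by auto
qed

lemma card_sp_pos: "card (signed_perms n) = 2 ^ n * card (PosP n)"
proof -
  let ?D = "PosP n \<times> Pow {1..int n}"
  let ?F = "\<lambda>(p, S). p \<circ> sig S"
  have inj: "inj_on ?F ?D"
  proof (rule inj_onI)
    fix x y assume x: "x \<in> ?D" and y: "y \<in> ?D" and e: "?F x = ?F y"
    obtain p S where xs: "x = (p, S)" by fastforce
    obtain p' S' where ys: "y = (p', S')" by fastforce
    have px: "p \<in> PosP n" "S \<subseteq> {1..int n}" using x xs by auto
    have py: "p' \<in> PosP n" "S' \<subseteq> {1..int n}" using y ys by auto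
    have "S = {a \<in> {1..int n}. (p \<circ> sig S) a < 0}" using neg_set[OF px] by simp
    also have "\<dots> = {a \<in> {1..int n}. (p' \<circ> sig S') a < 0}" using e xs ys by simp
    also have "\<dots> = S'" using neg_set[OF py] by simp
    finally have S: "S = S'" .
    have "p = (p \<circ> sig S) \<circ> sig S" by (simp add: comp_assoc sig_inv)
    also have "\<dots> = (p' \<circ> sig S') \<circ> sig S'" using e xs ys S by simp
    also have "\<dots> = p'" by (simp add: comp_assoc sig_inv)
    finally show "x = y" using xs ys S by simp
  qed
  have img: "?F ` ?D = signed_perms n"
  proof
    show "?F ` ?D \<subseteq> signed_perms n"
      by (auto intro!: sp_comp sig_sp dest: pos_D(1))
    show "signed_perms n \<subseteq> ?F ` ?D"
    proof
      fix w assume w: "w \<in> signed_perms n"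
      define S where "S = {a \<in> {1..int n}. w a < 0}"
      define p where "p = w \<circ> sig S"
      have S1: "S \<subseteq> {1..int n}" by (auto simp: S_def)
      have ps: "p \<in> signed_perms n" unfolding p_def using w sig_sp[OF S1] by (rule sp_comp)
      have "p \<in> PosP n" unfolding PosP_def
      proof (intro CollectI conjI allI impI ps)
        fix x :: int assume x: "x > 0"
        show "p x > 0"
        proof (cases "x \<le> int n")
          case True
          then have "w x \<in> AA n" using sp_D(1)[OF w, of x] x by (auto simp: AA_def)
          then have "w x \<noteq> 0" by (auto simp: AA_def)
          then show ?thesis using x True sp_D(3)[OF w, of x] by (auto simp: p_def sig_def S_def)
        next
          case False
          then have "\<bar>x\<bar> \<notin> S" using x by (auto simp: S_def)
          then show ?thesis using False x sp_D(4)[OF w, of x] by (auto simp: p_def sig_def)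
        qed
      qed
      moreover have "w = ?F (p, S)" by (simp add: p_def comp_assoc sig_inv)
      ultimately show "w \<in> ?F ` ?D" using S1 by blast
    qed
  qed
  have "card (signed_perms n) = card ?D" using card_image[OF inj] img by simp
  also have "\<dots> = card (PosP n) * 2 ^ n" by (simp add: card_cartesian_product card_Pow)
  finally show ?thesis by simp
qed

definition extp :: "(int \<Rightarrow> int) \<Rightarrow> int \<Rightarrow> int" where
  "extp p x = sgn x * p \<bar>x\<bar>"

lemma card_pos: "card (PosP n) = fact n"
proof -
  let ?P = "{p. p permutes {1..int n}}"
  have ext_pos: "extp p \<in> PosP n" if p: "p permutes {1..int n}" for p
  proof -
    have pin: "p x \<in> {1..int n} \<longleftrightarrow> x \<in> {1..int n}" for x using permutes_in_image[OF p] .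
    have pout: "x \<notin> {1..int n} \<Longrightarrow> p x = x" for x using permutes_not_in[OF p] .
    have ppos: "p x > 0" if "x > 0" for x using pin[of x] pout[of x] that by (cases "x \<le> int n") auto
    have sp: "extp p \<in> signed_perms n" unfolding sp_iff
    proof (intro conjI ballI allI impI)
      fix x assume x: "x \<in> AA n"
      then have "p \<bar>x\<bar> \<in> {1..int n}" using pin[of "\<bar>x\<bar>"] by (auto simp: AA_def)
      then show "extp p x \<in> AA n" using x by (auto simp: AA_def extp_def abs_mult)
    next
      show "inj_on (extp p) (AA n)"
      proof (rule inj_onI)
        fix x y assume x: "x \<in> AA n" and y: "y \<in> AA n" and e: "extp p x = extp p y"
        have nz: "x \<noteq> 0" "y \<noteq> 0" using x y by (auto simp: AA_def)
        have "p \<bar>x\<bar> > 0" "p \<bar>y\<bar> > 0" using ppos nz by auto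
        from sgn_eq[OF this nz] e have s: "sgn x = sgn y" and "p \<bar>x\<bar> = p \<bar>y\<bar>" by (simp_all add: extp_def)
        then have "\<bar>x\<bar> = \<bar>y\<bar>" using injD[OF permutes_inj[OF p]] by blast
        then show "x = y" using s by (blast intro: sgn_abs_eq)
      qed
    next
      fix x show "extp p (- x) = - extp p x" by (simp add: extp_def)
    next
      fix x assume "int n < \<bar>x\<bar>"
      then have "p \<bar>x\<bar> = \<bar>x\<bar>" using pout by auto
      then show "extp p x = x" by (simp add: extp_def sgn_mult_abs)
    qed
    show ?thesis unfolding PosP_def using sp ppos by (auto simp: extp_def)
  qed
  have inj: "inj_on extp ?P"
  proof (rule inj_onI)
    fix p q assume p: "p \<in> ?P" and q: "q \<in> ?P" and e: "extp p = extp q"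
    show "p = q"
    proof
      fix x show "p x = q x"
      proof (cases "x \<in> {1..int n}")
        case True
        then have "extp p x = p x" "extp q x = q x" by (auto simp: extp_def)
        then show ?thesis using e by simp
      next
        case False then show ?thesis using p q by (simp add: permutes_not_in)
      qed
    qed
  qed
  have img: "extp ` ?P = PosP n"
  proof
    show "extp ` ?P \<subseteq> PosP n" using ext_pos by auto
    show "PosP n \<subseteq> extp ` ?P"
    proof
      fix w assume wp: "w \<in> PosP n"
      note w = pos_D(1)[OF wp]
      define p where "p x = (if x \<in> {1..int n} then w x else x)" for x
      have "w x \<in> {1..int n}" if "x \<in> {1..int n}" for x
        using pos_D(2,3)[OF wp, of x] that by auto
      then have sub: "p ` {1..int n} \<subseteq> {1..int n}" by (auto simp: p_def)
      have "inj_on p {1..int n}"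
        using injD[OF sp_inj[OF w]] by (auto simp: p_def inj_on_def)
      then have "bij_betw p {1..int n} {1..int n}"
        using endo_inj_surj[OF _ sub] by (simp add: bij_betw_def)
      then have pp: "p permutes {1..int n}" by (rule bij_imp_permutes) (auto simp: p_def)
      have "extp p = w"
      proof
        fix x show "extp p x = w x"
        proof -
          consider "x = 0" | "x > 0" | "x < 0" by linarith
          then show ?thesis
          proof cases
            case 1 then show ?thesis using sp_D(5)[OF w] by (simp add: extp_def)
          next
            case 2 then show ?thesis using sp_D(4)[OF w, of x] by (auto simp: extp_def p_def)
          next
            case 3
            then have "w (- x) = - w x" using sp_D(3)[OF w] by simp
            then show ?thesis using 3 sp_D(4)[OF w, of "- x"] by (auto simp: extp_def p_def)
          qed
        qed
      qed
      then show "w \<in> extp ` ?P" using pp by blast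
    qed
  qed
  have "card (PosP n) = card ?P" using card_image[OF inj] img by simp
  also have "\<dots> = fact n" by (rule card_permutations) simp_all
  finally show ?thesis .
qed

lemma card_sp: "card (signed_perms n) = 2 ^ n * fact n"
  using card_sp_pos card_pos by simp

lemma finite_sp: "finite (signed_perms n)"
  using card_sp[of n] by (metis card.infinite fact_nonzero mult_eq_0_iff power_not_zero zero_neq_numeral)

lemma Ind_D: assumes "v \<in> Ind m" shows "v \<in> PosP m" "m \<ge> 1" "v \<in> signed_perms m"
proof -
  have v: "v \<in> signed_perms m" and C: "Cset m v = {0}" using assms by (auto simp: Ind_def)
  then have "0 \<in> Cset m v" by simp
  then have m: "0 < int m" and H: "\<And>k. 0 < k \<Longrightarrow> k \<le> int m \<Longrightarrow> \<bar>v 0\<bar> < v k"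
    unfolding Cset_def by auto
  show "m \<ge> 1" using m by simp
  show "v \<in> signed_perms m" by (rule v)
  show "v \<in> PosP m" unfolding PosP_def
  proof (intro CollectI conjI allI impI v)
    fix x :: int assume "x > 0"
    then show "v x > 0" using H[of x] sp_D(4)[OF v, of x] by (cases "x \<le> int m") auto
  qed
qed

lemma pos_C0: assumes v: "v \<in> PosP m" and m: "m \<ge> 1" shows "0 \<in> Cset m v"
  unfolding Cset_def using m pos_D(2)[OF v] sp_D(5)[OF pos_D(1)[OF v]] by auto

lemma Ind0: "Ind 0 = {}"
  by (auto dest: Ind_D(2))

lemma Cset_glue_Ind:
  assumes u: "u \<in> signed_perms i" and v: "v \<in> Ind m" and n: "n = i + m"
  shows "Cset n (glue i u v) = insert (int i) (Cset i u)"
proof -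
  have "Cset m v = {0}" using v by (simp add: Ind_def)
  then show ?thesis using Cset_glue[OF u Ind_D(1)[OF v] n Ind_D(2)[OF v]] by auto
qed

lemma Max_ins: "Max (insert (int i) (Cset i u)) = int i"
  using finite_Cset[of i u] Cset_sub[of i u] by (intro Max_eqI) auto

definition Sig :: "nat \<Rightarrow> (nat \<times> (int \<Rightarrow> int) \<times> (int \<Rightarrow> int)) set" where
  "Sig n = (SIGMA i:{..<n}. signed_perms i \<times> Ind (n - i))"
definition GG :: "nat \<times> (int \<Rightarrow> int) \<times> (int \<Rightarrow> int) \<Rightarrow> int \<Rightarrow> int" where
  "GG x = glue (fst x) (fst (snd x)) (snd (snd x))"
definition NE :: "nat \<Rightarrow> (int \<Rightarrow> int) set" where
  "NE n = {w \<in> signed_perms n. Cset n w \<noteq> {}}"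

lemma Sig_D: assumes "x \<in> Sig n"
  shows "fst x < n" "fst (snd x) \<in> signed_perms (fst x)" "snd (snd x) \<in> Ind (n - fst x)"
    "n = fst x + (n - fst x)"
  using assms by (auto simp: Sig_def)

lemma Cset_GG: "x \<in> Sig n \<Longrightarrow> Cset n (GG x) = insert (int (fst x)) (Cset (fst x) (fst (snd x)))"
  unfolding GG_def by (rule Cset_glue_Ind[OF Sig_D(2,3,4)])

lemma GG_inj: "inj_on GG (Sig n)"
proof (rule inj_onI)
  fix x y assume x: "x \<in> Sig n" and y: "y \<in> Sig n" and e: "GG x = GG y"
  have "Max (Cset n (GG x)) = int (fst x)" using Cset_GG[OF x] Max_ins by simp
  moreover have "Max (Cset n (GG y)) = int (fst y)" using Cset_GG[OF y] Max_ins by simp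
  ultimately have "int (fst x) = int (fst y)" using e by simp
  then have i: "fst x = fst y" by simp
  have "fst (snd x) = lft (fst x) (GG x)" using lft_glue[OF Sig_D(2)[OF x]] by (simp add: GG_def)
  also have "\<dots> = fst (snd y)" using lft_glue[OF Sig_D(2)[OF y]] e i by (simp add: GG_def)
  finally have u: "fst (snd x) = fst (snd y)" .
  have "snd (snd x) = rgt (fst x) (GG x)" using rgt_glue[OF Ind_D(3)[OF Sig_D(3)[OF x]]] by (simp add: GG_def)
  also have "\<dots> = snd (snd y)" using rgt_glue[OF Ind_D(3)[OF Sig_D(3)[OF y]]] e i by (simp add: GG_def)
  finally have v: "snd (snd x) = snd (snd y)" .
  show "x = y" using i u v by (simp add: prod_eq_iff)
qed

lemma GG_img: "GG ` Sig n = NE n"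
proof
  show "GG ` Sig n \<subseteq> NE n"
  proof
    fix w assume "w \<in> GG ` Sig n"
    then obtain x where x: "x \<in> Sig n" and w: "w = GG x" by blast
    have "w \<in> signed_perms n" unfolding w GG_def
      by (rule glue_sp[OF Sig_D(2)[OF x] Ind_D(1)[OF Sig_D(3)[OF x]] Sig_D(4)[OF x]])
    moreover have "Cset n w \<noteq> {}" using Cset_GG[OF x] w by simp
    ultimately show "w \<in> NE n" by (simp add: NE_def)
  qed
  show "NE n \<subseteq> GG ` Sig n"
  proof
    fix w assume "w \<in> NE n"
    then have w: "w \<in> signed_perms n" and ne: "Cset n w \<noteq> {}" by (auto simp: NE_def)
    define c where "c = Max (Cset n w)"
    have cin: "c \<in> Cset n w" unfolding c_def using finite_Cset ne by (rule Max_in)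
    have cmax: "d \<le> c" if "d \<in> Cset n w" for d unfolding c_def using finite_Cset that by (rule Max_ge)
    define i where "i = nat c"
    have ci: "c = int i" using cin by (auto simp: i_def Cset_def)
    have iin: "int i \<in> Cset n w" using cin ci by simp
    have iN: "i < n" using iin by (auto simp: Cset_def)
    define u where "u = lft i w"
    define v where "v = rgt i w"
    have u: "u \<in> signed_perms i" and v: "v \<in> PosP (n - i)" and wg: "glue i u v = w"
      using split_sp[OF w iin] by (simp_all add: u_def v_def)
    have nim: "n = i + (n - i)" "n - i \<ge> 1" using iN by auto
    have CC: "Cset n w = Cset i u \<union> {int i} \<union> {int i + c | c. c \<in> Cset (n - i) v \<and> c > 0}"
      using Cset_glue[OF u v nim] wg by simp
    have "Cset (n - i) v = {0}"
    proof
      show "Cset (n - i) v \<subseteq> {0}"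
      proof
        fix d assume d: "d \<in> Cset (n - i) v"
        have "d \<ge> 0" using d by (auto simp: Cset_def)
        moreover have "\<not> d > 0"
        proof
          assume "d > 0"
          then have "int i + d \<in> Cset n w" using CC d by blast
          then show False using cmax ci \<open>d > 0\<close> by fastforce
        qed
        ultimately show "d \<in> {0}" by simp
      qed
      show "{0} \<subseteq> Cset (n - i) v" using pos_C0[OF v nim(2)] by simp
    qed
    then have "v \<in> Ind (n - i)" using pos_D(1)[OF v] by (simp add: Ind_def)
    then have "(i, u, v) \<in> Sig n" using iN u by (simp add: Sig_def)
    moreover have "GG (i, u, v) = w" using wg by (simp add: GG_def)
    ultimately show "w \<in> GG ` Sig n" by force
  qed
qed

lemma card_NE_filter: "card {w \<in> NE n. P w} = card {x \<in> Sig n. P (GG x)}"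
proof -
  have img: "GG ` {x \<in> Sig n. P (GG x)} = {w \<in> NE n. P w}"
  proof
    show "GG ` {x \<in> Sig n. P (GG x)} \<subseteq> {w \<in> NE n. P w}" using GG_img[of n] by blast
    show "{w \<in> NE n. P w} \<subseteq> GG ` {x \<in> Sig n. P (GG x)}"
    proof
      fix w assume w: "w \<in> {w \<in> NE n. P w}"
      then obtain x where "x \<in> Sig n" "w = GG x" using GG_img[of n] by (metis (no_types, lifting) imageE mem_Collect_eq)
      then show "w \<in> GG ` {x \<in> Sig n. P (GG x)}" using w by blast
    qed
  qed
  have inj: "inj_on GG {x \<in> Sig n. P (GG x)}" by (rule inj_on_subset[OF GG_inj]) blast
  show ?thesis using card_image[OF inj] img by simp
qed

lemma finite_Ind: "finite (Ind m)"
  by (rule finite_subset[OF _ finite_sp[of m]]) (auto simp: Ind_def)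

lemma card_Sig_gen:
  assumes "\<And>i. i < n \<Longrightarrow> X i \<subseteq> signed_perms i"
  shows "card (SIGMA i:{..<n}. X i \<times> Ind (n - i)) = (\<Sum>i<n. card (X i) * card (Ind (n - i)))"
proof -
  have "\<forall>i\<in>{..<n}. finite (X i \<times> Ind (n - i))"
    using finite_cartesian_product[OF finite_subset[OF assms finite_sp] finite_Ind] by blast
  then have "card (SIGMA i:{..<n}. X i \<times> Ind (n - i)) = (\<Sum>i<n. card (X i \<times> Ind (n - i)))"
    by (rule card_SigmaI[OF finite_lessThan])
  then show ?thesis by (simp add: card_cartesian_product)
qed

lemma rec_tot: "card (signed_perms n) = card (Bnk n 0) + (\<Sum>i<n. card (signed_perms i) * card (Ind (n-i)))"
proof -
  have B0: "Bnk n 0 = {w \<in> signed_perms n. Cset n w = {}}"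
    using finite_Cset by (auto simp: Bnk_def)
  have U: "signed_perms n = Bnk n 0 \<union> NE n" by (auto simp: B0 NE_def)
  have D: "Bnk n 0 \<inter> NE n = {}" by (auto simp: B0 NE_def)
  have fin: "finite (Bnk n 0)" "finite (NE n)" using finite_sp[of n] by (auto simp: B0 NE_def)
  have "card (NE n) = card {w \<in> NE n. True}" by simp
  also have "\<dots> = card (Sig n)" unfolding card_NE_filter by simp
  also have "\<dots> = (\<Sum>i<n. card (signed_perms i) * card (Ind (n-i)))"
    unfolding Sig_def by (rule card_Sig_gen) simp
  finally have cNE: "card (NE n) = (\<Sum>i<n. card (signed_perms i) * card (Ind (n-i)))" .
  have "card (Bnk n 0 \<union> NE n) = card (Bnk n 0) + card (NE n)"
    by (rule card_Un_disjoint[OF fin D])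
  then show ?thesis using U cNE by simp
qed

lemma rec_k: "card (Bnk n (Suc k)) = (\<Sum>i<n. card (Bnk i k) * card (Ind (n-i)))"
proof -
  have "Bnk n (Suc k) = {w \<in> NE n. card (Cset n w) = Suc k}"
    by (auto simp: Bnk_def NE_def)
  then have "card (Bnk n (Suc k)) = card {x \<in> Sig n. card (Cset n (GG x)) = Suc k}"
    by (simp add: card_NE_filter)
  also have "{x \<in> Sig n. card (Cset n (GG x)) = Suc k} = (SIGMA i:{..<n}. Bnk i k \<times> Ind (n - i))"
  proof -
    have "card (Cset n (GG x)) = Suc (card (Cset (fst x) (fst (snd x))))" if "x \<in> Sig n" for x
    proof -
      have "int (fst x) \<notin> Cset (fst x) (fst (snd x))" by (auto simp: Cset_def)
      then show ?thesis using Cset_GG[OF that] finite_Cset by simp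
    qed
    then show ?thesis by (auto simp: Sig_def Bnk_def)
  qed
  also have "card \<dots> = (\<Sum>i<n. card (Bnk i k) * card (Ind (n-i)))"
    by (rule card_Sig_gen) (auto simp: Bnk_def)
  finally show ?thesis .
qed

lemma glue_pos_iff:
  assumes u: "u \<in> signed_perms i" and v: "v \<in> PosP m" and n: "n = i + m"
  shows "glue i u v \<in> PosP n \<longleftrightarrow> u \<in> PosP i"
proof
  have gs: "glue i u v \<in> signed_perms n" by (rule glue_sp[OF u v n])
  assume g: "glue i u v \<in> PosP n"
  show "u \<in> PosP i" unfolding PosP_def
  proof (intro CollectI conjI allI impI u)
    fix x :: int assume x: "x > 0"
    show "u x > 0"
    proof (cases "x \<le> int i")
      case True then show ?thesis using pos_D(2)[OF g x] x by (simp add: glue_def)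
    next
      case False then show ?thesis using sp_D(4)[OF u, of x] x by simp
    qed
  qed
next
  assume up: "u \<in> PosP i"
  show "glue i u v \<in> PosP n" unfolding PosP_def
  proof (intro CollectI conjI allI impI glue_sp[OF u v n])
    fix x :: int assume x: "x > 0"
    show "glue i u v x > 0"
    proof (cases "x \<le> int i")
      case True then show ?thesis using pos_D(2)[OF up x] x by (simp add: glue_def)
    next
      case False then show ?thesis using pos_D(2)[OF v, of "x - int i"] x by (simp add: glue_def)
    qed
  qed
qed

lemma rec_pos: assumes n: "n \<ge> 1" shows "card (PosP n) = (\<Sum>i<n. card (PosP i) * card (Ind (n-i)))"
proof -
  have "w \<in> NE n" if "w \<in> PosP n" for w
    using pos_C0[OF that n] pos_D(1)[OF that] unfolding NE_def by blast
  then have S: "{w \<in> NE n. w \<in> PosP n} = PosP n" by blast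
  have "card (PosP n) = card {x \<in> Sig n. GG x \<in> PosP n}"
    using card_NE_filter[of n "\<lambda>w. w \<in> PosP n"] unfolding S .
  also have "{x \<in> Sig n. GG x \<in> PosP n} = (SIGMA i:{..<n}. PosP i \<times> Ind (n - i))"
  proof -
    have "GG x \<in> PosP n \<longleftrightarrow> fst (snd x) \<in> PosP (fst x)" if "x \<in> Sig n" for x
      unfolding GG_def by (rule glue_pos_iff[OF Sig_D(2)[OF that] Ind_D(1)[OF Sig_D(3)[OF that]] Sig_D(4)[OF that]])
    note H = this
    show ?thesis
    proof (rule set_eqI)
      fix x :: "nat \<times> (int \<Rightarrow> int) \<times> (int \<Rightarrow> int)"
      obtain i u v where xe: "x = (i, u, v)" by (cases x) auto
      show "x \<in> {x \<in> Sig n. GG x \<in> PosP n} \<longleftrightarrow> x \<in> (SIGMA i:{..<n}. PosP i \<times> Ind (n - i))"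
        using H[of x] pos_D(1)[of u i] unfolding xe by (auto simp: Sig_def)
    qed
  qed
  also have "card \<dots> = (\<Sum>i<n. card (PosP i) * card (Ind (n-i)))"
    by (rule card_Sig_gen) (auto simp: PosP_def)
  finally show ?thesis .
qed

definition II :: "rat fps" where "II = Abs_fps (\<lambda>m. of_nat (card (Ind m)))"

lemma conv: fixes a :: "nat \<Rightarrow> nat"
  shows "fps_nth (Abs_fps (\<lambda>n. of_nat (a n)) * II) n = (of_nat (\<Sum>i<n. a i * card (Ind (n-i))) :: rat)"
proof -
  have "fps_nth (Abs_fps (\<lambda>n. of_nat (a n)) * II) n = (\<Sum>i=0..n. of_nat (a i) * of_nat (card (Ind (n-i))) :: rat)"
    by (simp add: fps_mult_nth II_def)
  also have "\<dots> = (\<Sum>i<n. of_nat (a i) * of_nat (card (Ind (n-i))))"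
  proof -
    have "{0..n} = insert n {..<n}" by auto
    then show ?thesis by (simp add: Ind0)
  qed
  finally show ?thesis by simp
qed

definition Pk :: "nat \<Rightarrow> rat fps" where "Pk k = Abs_fps (\<lambda>n. of_nat (card (Bnk n k)))"

lemma fA_eq: "fA = II"
proof -
  let ?F = "Abs_fps (\<lambda>n. fact n) :: rat fps"
  have F: "?F = Abs_fps (\<lambda>n. of_nat (card (PosP n)))" by (simp add: card_pos)
  have "?F * (1 - II) = 1"
  proof (rule fps_ext)
    fix n
    show "fps_nth (?F * (1 - II)) n = fps_nth 1 n"
    proof (cases "n = 0")
      case True
      then show ?thesis by (simp add: II_def Ind0)
    next
      case False
      have "fps_nth (?F * II) n = fps_nth ?F n" unfolding F conv using rec_pos[of n] False by simp
      then show ?thesis using False by (simp add: algebra_simps)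
    qed
  qed
  then have "inverse ?F = 1 - II" by (rule fps_inverse_unique)
  then show ?thesis unfolding fA_def by simp
qed

lemma fB_eq: "fB = Pk 0"
proof -
  let ?F = "Abs_fps (\<lambda>n. fact n) :: rat fps"
  let ?B = "Abs_fps (\<lambda>n. 2^n * fact n) :: rat fps"
  have B: "?B = Abs_fps (\<lambda>n. of_nat (card (signed_perms n)))" by (simp add: card_sp)
  have "?B = Pk 0 + ?B * II"
  proof (rule fps_ext)
    fix n
    show "fps_nth ?B n = fps_nth (Pk 0 + ?B * II) n"
      apply (subst (2) B) unfolding fps_add_nth conv
      by (subst B) (simp add: rec_tot[of n] Pk_def)
  qed
  then have "Pk 0 = ?B * (1 - II)" by (simp add: algebra_simps)
  then show ?thesis unfolding fB_def fA_eq[symmetric] fA_def by simp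
qed

lemma Pk_eq: "Pk k = fB * fA ^ k"
proof (induction k)
  case 0 then show ?case by (simp add: fB_eq)
next
  case (Suc k)
  have "Pk (Suc k) = Pk k * II"
    by (rule fps_ext) (simp add: Pk_def conv rec_k)
  then show ?case using Suc by (simp add: fA_eq algebra_simps)
qed

lemma inv_geom: fixes c :: "rat fps"
  shows "inverse (1 - fps_X * fps_const c) = Abs_fps (\<lambda>k. c ^ k)"
proof -
  let ?f = "1 - fps_X * fps_const c" and ?g = "Abs_fps (\<lambda>k. c ^ k)"
  have fg: "?f * ?g = 1"
  proof (rule fps_ext)
    fix n show "fps_nth (?f * ?g) n = fps_nth 1 n"
      by (cases n) (simp_all add: algebra_simps fps_X_mult_nth)
  qed
  have "fps_right_inverse ?f (fps_nth ?g 0) = ?g"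
    by (rule fps_lr_inverse_unique_ring1(2)) (use fg in simp_all)
  then show ?thesis by (simp add: fps_inverse_def fps_lr_inverse_one_one)
qed

theorem mainTheorem15:
  shows "fB = Abs_fps (\<lambda>n. of_nat (card (Bnk n 0)))
     \<and> (\<forall>n k. fps_nth (fps_nth GF k) n = of_nat (card (Bnk n k)))"
proof
  show "fB = Abs_fps (\<lambda>n. of_nat (card (Bnk n 0)))" using fB_eq by (simp add: Pk_def)
  show "\<forall>n k. fps_nth (fps_nth GF k) n = of_nat (card (Bnk n k))"
  proof (intro allI)
    fix n k
    have "fps_nth GF k = Pk k" by (simp add: GF_def inv_geom Pk_eq)
    then show "fps_nth (fps_nth GF k) n = of_nat (card (Bnk n k))" by (simp add: Pk_def)
  qed
qed
end
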